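(* There exists a function $f\in\bigcap_{\alpha\in(0,1)}C^{0,\alpha}([0,1])$ which does not have the relaxed Sard property, i.e. $f_\#(\mathbf{1}_S\mathcal{L}^1)$ is not mutually singular with $\mathcal{L}^1$, where $S$ is the critical set of $f$.
   Context: $C^{0,\alpha}([0,1])$ is the space of $\alpha$-Hölder continuous real functions on $[0,1]$. $\mathcal{L}^1$ denotes Lebesgue measure on $\mathbb{R}$, $\mathbf{1}_A$ the indicator function of $A$, and $f_\#\mu$ the pushforward of the measure $\mu$ under $f$. The critical set $S$ of $f$ is the set of all points $x\in[0,1]$ at which $f$ is either not differentiable or has $f'(x)=0$. *)

theory Defs
  imports "HOL-Analysis.Analysis"
begin

definition holder_on01 :: "real \<Rightarrow> (real \<Rightarrow> real) \<Rightarrow> bool" where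
  "holder_on01 \<alpha> f \<longleftrightarrow>
     (\<exists>C. \<forall>x\<in>{0..1}. \<forall>y\<in>{0..1}. \<bar>f x - f y\<bar> \<le> C * \<bar>x - y\<bar> powr \<alpha>)"

definition critical_set :: "(real \<Rightarrow> real) \<Rightarrow> real set" where
  "critical_set f = {x\<in>{0..1}. \<not> f differentiable (at x within {0..1})
        \<or> (f has_real_derivative 0) (at x within {0..1})}"

definition mutually_singular :: "'a measure \<Rightarrow> 'a measure \<Rightarrow> bool" where
  "mutually_singular \<mu> \<nu> \<longleftrightarrow>
     (\<exists>A\<in>sets \<mu>. emeasure \<mu> A = 0 \<and> emeasure \<nu> (space \<nu> - A) = 0)"

end

theory Submission imports Defs begin

definition zz :: "real \<Rightarrow> real" where "zz t = max (min (3*t) (2 - 3*t)) (3*t - 2)"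
definition ww :: "real \<Rightarrow> real" where "ww u = of_int \<lfloor>u\<rfloor> + zz (u - of_int \<lfloor>u\<rfloor>)"

lemma zz_lip: "\<bar>zz s - zz t\<bar> \<le> 3 * \<bar>s - t\<bar>"
  unfolding zz_def by (simp add: max_def min_def abs_if split: if_splits) linarith?

lemma zz_0 [simp]: "zz 0 = 0" and zz_1 [simp]: "zz 1 = 1" by (simp_all add: zz_def)

lemma zz_p0: "0 \<le> t \<Longrightarrow> t \<le> 1/3 \<Longrightarrow> zz t = 3*t" unfolding zz_def by (simp add: max_def min_def)
lemma zz_p1: "1/3 \<le> t \<Longrightarrow> t \<le> 2/3 \<Longrightarrow> zz t = 2 - 3*t" unfolding zz_def by (simp add: max_def min_def)
lemma zz_p2: "2/3 \<le> t \<Longrightarrow> t \<le> 1 \<Longrightarrow> zz t = 3*t - 2" unfolding zz_def by (simp add: max_def min_def)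
lemma zz_range: "0 \<le> t \<Longrightarrow> t \<le> 1 \<Longrightarrow> 0 \<le> zz t \<and> zz t \<le> 1" unfolding zz_def by (simp add: max_def min_def)

lemma ww_int [simp]: "ww (of_int n) = of_int n" by (simp add: ww_def)

lemma ww_cell:
  assumes "of_int m \<le> u" "u \<le> of_int m + 1"
  shows "ww u = of_int m + zz (u - of_int m)"
proof (cases "u < of_int m + 1")
  case True
  then have "\<lfloor>u\<rfloor> = m" using assms by (simp add: floor_eq_iff)
  then show ?thesis by (simp add: ww_def)
next
  case False
  then have "u = of_int (m+1)" using assms by simp
  then show ?thesis using ww_int[of "m+1"] by simp
qed

lemma ww_bounds: "of_int \<lfloor>u\<rfloor> \<le> ww u \<and> ww u \<le> of_int \<lfloor>u\<rfloor> + 1"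
  using zz_range[of "u - of_int \<lfloor>u\<rfloor>"] of_int_floor_le[of u] real_of_int_floor_add_one_gt[of u]
  by (simp add: ww_def)

lemma ww_close: "\<bar>ww u - u\<bar> \<le> 1"
  using ww_bounds[of u] of_int_floor_le[of u] real_of_int_floor_add_one_gt[of u] by linarith

lemma ww_lip_le:
  assumes "u \<le> v" shows "\<bar>ww u - ww v\<bar> \<le> 3 * \<bar>u - v\<bar>"
proof (cases "\<lfloor>u\<rfloor> = \<lfloor>v\<rfloor>")
  case True
  then show ?thesis using zz_lip[of "u - of_int \<lfloor>u\<rfloor>" "v - of_int \<lfloor>u\<rfloor>"] by (simp add: ww_def)
next
  case False
  define a where "a = \<lfloor>u\<rfloor>"
  define b where "b = \<lfloor>v\<rfloor>"
  have ab: "a + 1 \<le> b" using False assms floor_mono[OF assms] unfolding a_def b_def by linarith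
  have ua: "of_int a \<le> u" "u < of_int a + 1" unfolding a_def by linarith+
  have vb: "of_int b \<le> v" "v < of_int b + 1" unfolding b_def by linarith+
  have wu: "ww u = of_int a + zz (u - of_int a)" by (simp add: ww_def a_def)
  have wv: "ww v = of_int b + zz (v - of_int b)" by (simp add: ww_def b_def)
  have z1: "\<bar>zz 1 - zz (u - of_int a)\<bar> \<le> 3 * \<bar>1 - (u - of_int a)\<bar>" by (rule zz_lip)
  have z2: "\<bar>zz (v - of_int b) - zz 0\<bar> \<le> 3 * \<bar>(v - of_int b) - 0\<bar>" by (rule zz_lip)
  have r1: "0 \<le> zz (u - of_int a) \<and> zz (u - of_int a) \<le> 1" using ua by (intro zz_range) auto
  have r2: "0 \<le> zz (v - of_int b) \<and> zz (v - of_int b) \<le> 1" using vb by (intro zz_range) auto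
  have ab': "real_of_int a + 1 \<le> real_of_int b" using ab by linarith
  show ?thesis using z1 z2 r1 r2 ua vb ab' unfolding wu wv by (simp add: abs_if split: if_splits) linarith?
qed

lemma ww_lip: "\<bar>ww u - ww v\<bar> \<le> 3 * \<bar>u - v\<bar>"
  using ww_lip_le[of u v] ww_lip_le[of v u] by (cases "u \<le> v") (auto simp: abs_minus_commute)


definition MM :: "nat \<Rightarrow> nat" where "MM k = 3^k * 2^(k^2)"
definition rho :: "nat \<Rightarrow> real \<Rightarrow> real" where "rho k x = ww (real (MM k) * x) / real (MM k)"

fun FF :: "nat \<Rightarrow> real \<Rightarrow> real" where
  "FF 0 x = x"
| "FF (Suc k) x = FF k (rho k x)"

lemma MM_pos: "0 < MM k" by (simp add: MM_def)

lemma rho_lip: "\<bar>rho k x - rho k y\<bar> \<le> 3 * \<bar>x - y\<bar>"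
proof -
  define M where "M = real (MM k)"
  have M: "0 < M" using MM_pos by (simp add: M_def)
  have e: "rho k x - rho k y = (ww (M * x) - ww (M * y)) / M" by (simp add: rho_def M_def diff_divide_distrib)
  have l: "\<bar>ww (M * x) - ww (M * y)\<bar> \<le> 3 * \<bar>M * x - M * y\<bar>" by (rule ww_lip)
  have d: "M * x - M * y = M * (x - y)" by (simp add: algebra_simps)
  have "\<bar>M * x - M * y\<bar> = M * \<bar>x - y\<bar>" unfolding d using M by (simp add: abs_mult)
  then have l2: "\<bar>ww (M * x) - ww (M * y)\<bar> \<le> M * (3 * \<bar>x - y\<bar>)" using l by simp
  have "\<bar>(ww (M * x) - ww (M * y)) / M\<bar> = \<bar>ww (M * x) - ww (M * y)\<bar> / M" using M by simp
  also have "\<dots> \<le> (M * (3 * \<bar>x - y\<bar>)) / M" by (rule divide_right_mono[OF l2]) (use M in simp)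
  also have "\<dots> = 3 * \<bar>x - y\<bar>" using M by simp
  finally show ?thesis unfolding e .
qed

lemma rho_close: "\<bar>rho k x - x\<bar> \<le> 1 / real (MM k)"
proof -
  define M where "M = real (MM k)"
  have M: "0 < M" using MM_pos by (simp add: M_def)
  have r: "rho k x = ww (M * x) / M" by (simp add: rho_def M_def)
  have e: "ww (M * x) / M - x = (ww (M * x) - M * x) / M"
    using M by (simp add: diff_divide_distrib)
  have "\<bar>(ww (M * x) - M * x) / M\<bar> = \<bar>ww (M * x) - M * x\<bar> / M" using M by simp
  also have "\<dots> \<le> 1 / M" by (rule divide_right_mono[OF ww_close]) (use M in simp)
  finally have "\<bar>rho k x - x\<bar> \<le> 1 / M" by (simp only: r e)
  then show ?thesis by (simp add: M_def)
qed

lemma rho_fix: "rho k (of_int n / real (MM k)) = of_int n / real (MM k)"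
proof -
  have "real (MM k) * (of_int n / real (MM k)) = of_int n" using MM_pos[of k] by simp
  then show ?thesis by (simp add: rho_def)
qed

lemma FF_lip: "\<bar>FF N x - FF N y\<bar> \<le> 3^N * \<bar>x - y\<bar>"
proof (induction N arbitrary: x y)
  case 0 then show ?case by simp
next
  case (Suc N)
  have "\<bar>FF N (rho N x) - FF N (rho N y)\<bar> \<le> 3^N * \<bar>rho N x - rho N y\<bar>" by (rule Suc.IH)
  also have "\<dots> \<le> 3^N * (3 * \<bar>x - y\<bar>)" by (intro mult_left_mono rho_lip) simp
  finally show ?case by simp
qed

lemma FF_step: "\<bar>FF (Suc k) x - FF k x\<bar> \<le> (1/2)^(k^2)"
proof -
  have "\<bar>FF k (rho k x) - FF k x\<bar> \<le> 3^k * \<bar>rho k x - x\<bar>" by (rule FF_lip)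
  also have "\<dots> \<le> 3^k * (1 / real (MM k))" by (intro mult_left_mono rho_close) simp
  also have "\<dots> = (1/2)^(k^2)"
  proof -
    have "real (MM k) = 3^k * 2^(k^2)" by (simp add: MM_def)
    moreover have "(1/2::real)^(k^2) = 1 / 2^(k^2)" by (simp add: power_one_over)
    ultimately show ?thesis by simp
  qed
  finally show ?thesis by simp
qed

lemma rho_affine:
  fixes m i :: int
  assumes i: "0 \<le> i" "i \<le> 2"
    and x: "(3 * of_int m + of_int i) / (3 * real (MM k)) \<le> x" "x \<le> (3 * of_int m + of_int i + 1) / (3 * real (MM k))"
  shows "rho k x = (if i = 1 then (4 * of_int m + 2) / real (MM k) else - (2 * of_int m + of_int i) / real (MM k))
           + (if i = 1 then -3 else 3) * x
         \<and> of_int m / real (MM k) \<le> rho k x \<and> rho k x \<le> (of_int m + 1) / real (MM k)"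
proof -
  define M where "M = real (MM k)"
  have M: "0 < M" using MM_pos by (simp add: M_def)
  define u where "u = M * x"
  have u1: "3 * of_int m + of_int i \<le> 3 * u" using x(1)[folded M_def] M by (simp add: u_def field_simps)
  have u2: "3 * u \<le> 3 * of_int m + of_int i + 1" using x(2)[folded M_def] M by (simp add: u_def field_simps)
  have iv: "real_of_int i \<ge> 0" "real_of_int i \<le> 2" using i by simp_all
  have wc: "ww u = of_int m + zz (u - of_int m)" using u1 u2 iv by (intro ww_cell) linarith+
  have zr: "0 \<le> zz (u - of_int m) \<and> zz (u - of_int m) \<le> 1" using u1 u2 iv by (intro zz_range) linarith+
  have rk: "rho k x = ww u / M" by (simp add: rho_def u_def M_def)
  have cases: "i = 0 \<or> i = 1 \<or> i = 2" using i by linarith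
  have A: "ww u = (if i = 1 then (4 * of_int m + 2) else - (2 * of_int m + of_int i)) + (if i = 1 then -3 else 3) * u"
  proof -
    { assume "i = 0" then have ?thesis using u1 u2 by (simp add: wc zz_p0) }
    moreover { assume "i = 1" then have ?thesis using u1 u2 by (simp add: wc zz_p1) }
    moreover { assume "i = 2" then have ?thesis using u1 u2 by (simp add: wc zz_p2) }
    ultimately show ?thesis using cases by blast
  qed
  have "rho k x = (if i = 1 then (4 * of_int m + 2) / M else - (2 * of_int m + of_int i) / M)
           + (if i = 1 then -3 else 3) * x"
    using M unfolding rk A by (simp add: u_def field_simps)
  moreover have "of_int m / M \<le> rho k x \<and> rho k x \<le> (of_int m + 1) / M"
    using zr M unfolding rk wc by (simp add: divide_right_mono)
  ultimately show ?thesis by (simp add: M_def)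
qed


definition dd :: "nat \<Rightarrow> real \<Rightarrow> real" where "dd k x = FF (Suc k) x - FF k x"
definition ff :: "real \<Rightarrow> real" where "ff x = x + (\<Sum>k. dd k x)"

lemma half_pow_sq: "(1/2::real)^((k+n)^2) \<le> (1/2)^(n^2) * (1/2)^k"
proof -
  have "k \<le> k * k" by (cases k) auto
  then have "n^2 + k \<le> (k+n)^2" unfolding power2_eq_square by (simp add: algebra_simps add_increasing2)
  then have "(1/2::real)^((k+n)^2) \<le> (1/2)^(n^2 + k)" by (intro power_decreasing) auto
  then show ?thesis by (simp add: power_add)
qed

lemma summable_bound: "summable (\<lambda>k. (1/2::real)^(n^2) * (1/2)^k)"
  by (intro summable_mult summable_geometric) simp

lemma dd_tail_summable: "summable (\<lambda>k. dd (k+n) x)"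
  apply (rule summable_comparison_test[OF _ summable_bound[of n]])
  using FF_step half_pow_sq order_trans unfolding dd_def real_norm_def by blast

lemma dd_summable: "summable (\<lambda>k. dd k x)"
  using dd_tail_summable[of 0 x] by simp

lemma FF_sum: "FF n x = x + (\<Sum>k<n. dd k x)"
  unfolding dd_def by (subst sum_lessThan_telescope) simp

lemma ff_tail: "ff x = FF n x + (\<Sum>k. dd (k+n) x)"
  unfolding ff_def FF_sum using suminf_split_initial_segment[OF dd_summable, of x n] by simp

lemma ff_close: "\<bar>ff x - FF n x\<bar> \<le> 2 * (1/2)^(n^2)"
proof -
  have bnd: "norm (dd (k+n) x) \<le> (1/2::real)^(n^2) * (1/2)^k" for k
    using FF_step[of "k+n" x] half_pow_sq[of k n] unfolding dd_def real_norm_def by linarith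
  have s: "summable (\<lambda>k. norm (dd (k+n) x))"
    by (rule summable_comparison_test[OF _ summable_bound[of n]]) (use bnd in simp)
  have "\<bar>\<Sum>k. dd (k+n) x\<bar> \<le> (\<Sum>k. norm (dd (k+n) x))" using summable_norm[OF s] by simp
  also have "\<dots> \<le> (\<Sum>k. (1/2::real)^(n^2) * (1/2)^k)"
    by (rule suminf_le[OF bnd s summable_bound])
  also have "\<dots> = (1/2)^(n^2) * (\<Sum>k. (1/2::real)^k)"
    by (rule suminf_mult[OF summable_geometric]) simp
  also have "(\<Sum>k. (1/2::real)^k) = 2"
    using suminf_geometric[of "1/2::real"] by simp
  finally have "\<bar>\<Sum>k. dd (k+n) x\<bar> \<le> (1/2)^(n^2) * 2" .
  moreover have "ff x - FF n x = (\<Sum>k. dd (k+n) x)" using ff_tail[of x n] by linarith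
  ultimately show ?thesis by (simp only: mult.commute)
qed

lemma FF_tendsto: "(\<lambda>n. FF n x) \<longlonglongrightarrow> ff x"
  unfolding FF_sum ff_def by (intro tendsto_add tendsto_const summable_LIMSEQ dd_summable)

lemma ff_est: "\<bar>ff x - ff y\<bar> \<le> 3^n * \<bar>x - y\<bar> + 4 * (1/2)^(n^2)"
  using ff_close[of x n] ff_close[of y n] FF_lip[of n x y] by linarith


lemma quad_bound:
  fixes b N :: real assumes b: "0 < b"
  shows "2 powr (2*N) * 2 powr (-(b*N^2)) \<le> 2 powr (1/b)"
proof -
  have sq: "0 \<le> (b*N - 1)^2" by simp
  have "(2*N - b*N^2) * b = 1 - (b*N - 1)^2" by (simp add: power2_eq_square algebra_simps)
  then have "(2*N - b*N^2) * b \<le> 1" using sq by linarith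
  then have le: "2*N + (-(b*N^2)) \<le> 1/b" using b by (simp add: pos_le_divide_eq)
  have "2 powr (2*N) * 2 powr (-(b*N^2)) = 2 powr (2*N + (-(b*N^2)))" by (rule powr_add[symmetric])
  also have "\<dots> \<le> 2 powr (1/b)" by (rule powr_mono[OF le]) simp
  finally show ?thesis .
qed

lemma exists_scale:
  fixes h :: real assumes h: "0 < h" "h \<le> 1"
  obtains N where "(1/2)^((N+1)^2) < h" "h \<le> (1/2)^(N^2)"
proof -
  define P where "P n \<longleftrightarrow> (1/2::real)^((n+1)^2) < h" for n
  obtain n where n: "(1/2::real)^n < h" using real_arch_pow_inv[OF h(1), of "1/2"] by auto
  have "n \<le> (n+1)^2" by (simp add: power2_eq_square)
  then have "(1/2::real)^((n+1)^2) \<le> (1/2)^n" by (intro power_decreasing) auto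
  then have Pn: "P n" using n unfolding P_def by linarith
  define N where "N = (LEAST n. P n)"
  have PN: "P N" unfolding N_def by (rule LeastI[of P n, OF Pn])
  have "h \<le> (1/2)^(N^2)"
  proof (cases N)
    case 0 then show ?thesis using h by simp
  next
    case (Suc k)
    then have "k < N" by simp
    then have "\<not> P k" unfolding N_def by (rule not_less_Least)
    then show ?thesis unfolding P_def using Suc by simp
  qed
  then show ?thesis using that PN unfolding P_def by blast
qed

lemma ff_holder_est:
  fixes a :: real assumes a: "0 < a" "a < 1" and h: "\<bar>x - y\<bar> \<le> 1"
  shows "\<bar>ff x - ff y\<bar> \<le> (9 * 2 powr (1/(1-a))) * \<bar>x - y\<bar> powr a"
proof (cases "x = y")
  case True then show ?thesis by simp
next
  case False
  define h where "h = \<bar>x - y\<bar>"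
  define b where "b = 1 - a"
  have b: "0 < b" using a by (simp add: b_def)
  have h0: "0 < h" using False by (simp add: h_def)
  obtain N where N1: "(1/2)^((N+1)^2) < h" and N2: "h \<le> (1/2)^(N^2)"
    using exists_scale[OF h0 h[folded h_def]] by blast
  have e1: "(1/2::real)^(N^2) = (1/2)^((N+1)^2) * 2^(2*N+1)"
  proof -
    have "(N+1)^2 = N^2 + (2*N+1)" by (simp add: power2_eq_square)
    then have "(1/2::real)^((N+1)^2) = (1/2)^(N^2) * (1/2)^(2*N+1)" by (simp add: power_add)
    moreover have "(1/2::real)^(2*N+1) * 2^(2*N+1) = 1" by (simp add: power_one_over)
    ultimately show ?thesis by (metis mult.assoc mult.right_neutral)
  qed
  have "(2::real)^(2*N+1) = 2 * 4^N" by (simp add: power_mult power_add)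
  then have e2: "4 * (1/2::real)^(N^2) \<le> 8 * 4^N * h" using e1 N1
  proof -
    have "4 * (1/2::real)^(N^2) = 8 * 4^N * (1/2)^((N+1)^2)" unfolding e1 \<open>(2::real)^(2*N+1) = 2 * 4^N\<close> by simp
    also have "\<dots> \<le> 8 * 4^N * h" using N1 by (intro mult_left_mono) auto
    finally show ?thesis .
  qed
  have p34: "(3::real)^N \<le> 4^N" by (intro power_mono) auto
  have step1: "\<bar>ff x - ff y\<bar> \<le> 9 * 4^N * h"
  proof -
    have "\<bar>ff x - ff y\<bar> \<le> 3^N * h + 4 * (1/2)^(N^2)" using ff_est[of x y N] by (simp add: h_def)
    also have "\<dots> \<le> 4^N * h + 8 * 4^N * h" using e2 p34 h0 by (intro add_mono mult_right_mono) auto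
    finally show ?thesis by (simp add: algebra_simps)
  qed
  have hsplit: "h = h powr a * h powr b" using h0 by (simp add: b_def flip: powr_add)
  have hb: "h powr b \<le> ((1/2::real)^(N^2)) powr b" using N2 h0 b by (intro powr_mono2) auto
  have hb2: "((1/2::real)^(N^2)) powr b = 2 powr (-(b * real N^2))"
  proof -
    have p: "2 powr (real (N^2)) = (2::real)^(N^2)" by (rule powr_realpow) simp
    have "(1/2::real)^(N^2) = 2 powr (- real (N^2))"
      unfolding powr_minus_divide p by (simp add: power_one_over)
    then show ?thesis by (simp add: powr_powr mult.commute)
  qed
  have f4: "(4::real)^N = 2 powr (2 * real N)"
  proof -
    have "(4::real)^N = 2^(2*N)" by (simp add: power_mult)
    then show ?thesis by (simp add: powr_realpow[symmetric])
  qed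
  have "4^N * h powr b \<le> 2 powr (1/b)"
  proof -
    have "4^N * h powr b \<le> 4^N * 2 powr (-(b * real N^2))" using hb hb2 by (intro mult_left_mono) auto
    also have "\<dots> \<le> 2 powr (1/b)" unfolding f4 using quad_bound[OF b, of "real N"] by simp
    finally show ?thesis .
  qed
  then have "9 * (4^N * h powr b) * h powr a \<le> (9 * 2 powr (1/b)) * h powr a"
    by (intro mult_right_mono) auto
  moreover have "9 * 4^N * h = 9 * (4^N * h powr b) * h powr a"
  proof -
    have "9 * 4^N * h = 9 * 4^N * (h powr a * h powr b)" by (simp only: hsplit[symmetric])
    then show ?thesis by (simp add: ac_simps)
  qed
  ultimately have "9 * 4^N * h \<le> (9 * 2 powr (1/b)) * h powr a" by simp
  then show ?thesis using step1 by (simp add: h_def b_def)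
qed

lemma ff_holder: "0 < a \<Longrightarrow> a < 1 \<Longrightarrow> holder_on01 a ff"
  unfolding holder_on01_def
  by (rule exI[of _ "9 * 2 powr (1/(1-a))"]) (auto intro!: ff_holder_est)


lemma ff_cont: "continuous_on UNIV ff"
  unfolding continuous_on_iff
proof (intro ballI allI impI)
  fix x :: real and e :: real assume e: "0 < e"
  obtain n where n: "(1/2::real)^n < e/8" using real_arch_pow_inv[of "e/8" "1/2"] e by auto
  have "n \<le> n^2" by (simp add: power2_eq_square)
  then have "(1/2::real)^(n^2) \<le> (1/2)^n" by (intro power_decreasing) auto
  then have n2: "4 * (1/2::real)^(n^2) < e/2" using n by linarith
  define d where "d = e / (2 * 3^n)"
  have d: "0 < d" using e by (simp add: d_def)
  show "\<exists>d>0. \<forall>x'\<in>UNIV. dist x' x < d \<longrightarrow> dist (ff x') (ff x) < e"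
  proof (intro exI[of _ d] conjI ballI impI d)
    fix x' assume "dist x' x < d"
    then have "3^n * \<bar>x' - x\<bar> \<le> 3^n * d" by (simp add: dist_real_def)
    also have "3^n * d = e/2" by (simp add: d_def)
    finally show "dist (ff x') (ff x) < e" using ff_est[of x' x n] n2 by (simp add: dist_real_def)
  qed
qed

lemma FF_cont: "continuous_on UNIV (FF n)"
proof -
  have "(3^n)-lipschitz_on UNIV (FF n)"
    by (rule lipschitz_onI) (simp_all add: dist_real_def FF_lip)
  then show ?thesis by (rule lipschitz_on_continuous_on)
qed

lemma rho_cont: "continuous_on UNIV (rho k)"
proof -
  have "3-lipschitz_on UNIV (rho k)"
    by (rule lipschitz_onI) (simp_all add: dist_real_def rho_lip)
  then show ?thesis by (rule lipschitz_on_continuous_on)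
qed

lemma MM_Suc: "MM (Suc N) = 3 * MM N * 2^(2*N+1)"
proof -
  have "(Suc N)^2 = N^2 + (2*N+1)" by (simp add: power2_eq_square)
  then show ?thesis by (simp add: MM_def power_add)
qed

lemma FF_aff:
  "\<forall>m::int. \<exists>c s. \<bar>s\<bar> = 3^N \<and> (\<forall>x. of_int m / real (MM N) \<le> x \<and> x \<le> (of_int m + 1) / real (MM N) \<longrightarrow> FF N x = c + s * x)"
  and FF_aff3:
  "\<forall>j::int. \<exists>c s. \<bar>s\<bar> = 3^(Suc N) \<and> (\<forall>x. of_int j / (3 * real (MM N)) \<le> x \<and> x \<le> (of_int j + 1) / (3 * real (MM N)) \<longrightarrow> FF (Suc N) x = c + s * x)"
proof -
  have Q: "\<forall>j::int. \<exists>c s. \<bar>s\<bar> = 3^(Suc N) \<and> (\<forall>x. of_int j / (3 * real (MM N)) \<le> x \<and> x \<le> (of_int j + 1) / (3 * real (MM N)) \<longrightarrow> FF (Suc N) x = c + s * x)"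
    if P: "\<forall>m::int. \<exists>c s. \<bar>s\<bar> = 3^N \<and> (\<forall>x. of_int m / real (MM N) \<le> x \<and> x \<le> (of_int m + 1) / real (MM N) \<longrightarrow> FF N x = c + s * x)"
    for N
  proof
    fix j :: int
    define m where "m = j div 3"
    define i where "i = j mod 3"
    have ji: "of_int j = 3 * of_int m + (of_int i :: real)" unfolding m_def i_def
      by (metis div_mult_mod_eq of_int_add of_int_mult mult.commute of_int_numeral)
    have i: "0 \<le> i" "i \<le> 2" unfolding i_def by auto
    obtain c s where s: "\<bar>s\<bar> = 3^N"
      and cs: "\<And>y. of_int m / real (MM N) \<le> y \<Longrightarrow> y \<le> (of_int m + 1) / real (MM N) \<Longrightarrow> FF N y = c + s * y"
      using P by blast
    define t where "t = (if i = 1 then (4 * of_int m + 2) / real (MM N) else - (2 * of_int m + of_int i) / real (MM N))"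
    define \<sigma> where "\<sigma> = (if i = 1 then -3 else (3::real))"
    have abs_s: "\<bar>s * \<sigma>\<bar> = 3^(Suc N)" using s by (simp add: abs_mult \<sigma>_def)
    have eq: "FF (Suc N) x = (c + s * t) + (s * \<sigma>) * x"
      if x: "of_int j / (3 * real (MM N)) \<le> x \<and> x \<le> (of_int j + 1) / (3 * real (MM N))" for x
    proof -
      have ra: "rho N x = t + \<sigma> * x \<and> of_int m / real (MM N) \<le> rho N x \<and> rho N x \<le> (of_int m + 1) / real (MM N)"
        unfolding t_def \<sigma>_def by (rule rho_affine[OF i]) (use x ji in auto)
      then show ?thesis
        using cs[of "rho N x"] by (simp add: algebra_simps)
    qed
    show "\<exists>c s. \<bar>s\<bar> = 3^(Suc N) \<and> (\<forall>x. of_int j / (3 * real (MM N)) \<le> x \<and> x \<le> (of_int j + 1) / (3 * real (MM N)) \<longrightarrow> FF (Suc N) x = c + s * x)" using abs_s eq by blast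
  qed
  have P: "\<forall>m::int. \<exists>c s. \<bar>s\<bar> = 3^N \<and> (\<forall>x. of_int m / real (MM N) \<le> x \<and> x \<le> (of_int m + 1) / real (MM N) \<longrightarrow> FF N x = c + s * x)"
  proof (induction N)
    case 0
    show ?case by (intro allI exI[of _ 0] exI[of _ 1]) simp
  next
    case (Suc N)
    note QN = Q[OF Suc.IH]
    show ?case
    proof
      fix m :: int
      define q :: int where "q = 2^(2*N+1)"
      have q: "0 < q" by (simp add: q_def)
      define j where "j = m div q"
      have j1: "j * q \<le> m" unfolding j_def by (metis mult.commute mult_div_mod_eq q pos_mod_sign le_add_same_cancel1)
      have j2: "m + 1 \<le> (j + 1) * q"
      proof -
        have a: "j * q + m mod q = m" unfolding j_def by (rule div_mult_mod_eq)
        have b: "m mod q < q" using q by simp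
        have c: "(j + 1) * q = j * q + q" by (simp add: distrib_right)
        show ?thesis unfolding c using a b by linarith
      qed
      obtain c s where s: "\<bar>s\<bar> = 3^(Suc N)"
        and cs: "\<And>y. of_int j / (3 * real (MM N)) \<le> y \<Longrightarrow> y \<le> (of_int j + 1) / (3 * real (MM N)) \<Longrightarrow> FF (Suc N) y = c + s * y"
        using QN by blast
      have MS: "real (MM (Suc N)) = 3 * real (MM N) * of_int q" by (simp add: MM_Suc q_def)
      have K: "0 < 3 * real (MM N)" using MM_pos[of N] by simp
      have qr: "0 < real_of_int q" using q by simp
      have eqx: "FF (Suc N) x = c + s * x" if x: "of_int m / real (MM (Suc N)) \<le> x \<and> x \<le> (of_int m + 1) / real (MM (Suc N))" for x
      proof -
        have j1r: "real_of_int j * real_of_int q \<le> real_of_int m" using j1 by (metis of_int_le_iff of_int_mult)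
        have j2r: "real_of_int m + 1 \<le> (real_of_int j + 1) * real_of_int q" using j2 by (metis of_int_le_iff of_int_mult of_int_add of_int_1)
        have "of_int j / (3 * real (MM N)) = (of_int j * of_int q) / (3 * real (MM N) * of_int q)" using qr by simp
        also have "\<dots> \<le> of_int m / real (MM (Suc N))" unfolding MS using K qr j1r by (intro divide_right_mono) auto
        finally have x1: "of_int j / (3 * real (MM N)) \<le> x" using x by linarith
        have "(of_int m + 1) / real (MM (Suc N)) \<le> ((of_int j + 1) * of_int q) / (3 * real (MM N) * of_int q)" 
          unfolding MS using K qr j2r by (intro divide_right_mono) auto
        also have "\<dots> = (of_int j + 1) / (3 * real (MM N))" using qr by simp
        finally have x2: "x \<le> (of_int j + 1) / (3 * real (MM N))" using x by linarith
        show "FF (Suc N) x = c + s * x" using cs[OF x1 x2] .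
      qed
      show "\<exists>c s. \<bar>s\<bar> = 3^Suc N \<and> (\<forall>x. of_int m / real (MM (Suc N)) \<le> x \<and> x \<le> (of_int m + 1) / real (MM (Suc N)) \<longrightarrow> FF (Suc N) x = c + s * x)" using eqx s by blast
    qed
  qed
  show "\<forall>m::int. \<exists>c s. \<bar>s\<bar> = 3^N \<and> (\<forall>x. of_int m / real (MM N) \<le> x \<and> x \<le> (of_int m + 1) / real (MM N) \<longrightarrow> FF N x = c + s * x)"
    by (rule P)
  show "\<forall>j::int. \<exists>c s. \<bar>s\<bar> = 3^(Suc N) \<and> (\<forall>x. of_int j / (3 * real (MM N)) \<le> x \<and> x \<le> (of_int j + 1) / (3 * real (MM N)) \<longrightarrow> FF (Suc N) x = c + s * x)"
    by (rule Q[OF P])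
qed


lemma MM_dvd: assumes "N < k" shows "3 * MM N dvd MM k"
proof -
  have "N^2 \<le> k^2" using assms by (intro power_mono) auto
  then have "(2::nat)^(N^2) dvd 2^(k^2)" by (rule le_imp_power_dvd)
  moreover have "(3::nat)^(Suc N) dvd 3^k" using assms by (intro le_imp_power_dvd) auto
  ultimately have "3^(Suc N) * 2^(N^2) dvd 3^k * (2::nat)^(k^2)" by (rule mult_dvd_mono[rotated])
  then show ?thesis by (simp add: MM_def mult.assoc)
qed

lemma rho_fix_grid:
  assumes "N < k" shows "rho k (of_int j / (3 * real (MM N))) = of_int j / (3 * real (MM N))"
proof -
  obtain r where r: "MM k = 3 * MM N * r" using MM_dvd[OF assms] by (auto elim: dvdE)
  have rpos: "0 < r" using MM_pos[of k] r by (cases r) auto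
  have "of_int j / (3 * real (MM N)) = of_int (j * int r) / real (MM k)"
    unfolding r using rpos by simp
  then show ?thesis using rho_fix[of k "j * int r"] by simp
qed

lemma ff_grid: "ff (of_int j / (3 * real (MM N))) = FF (Suc N) (of_int j / (3 * real (MM N)))"
proof -
  define p where "p = of_int j / (3 * real (MM N))"
  have "dd (k + Suc N) p = 0" for k
    unfolding dd_def p_def using rho_fix_grid[of N "k + Suc N" j] by simp
  then show ?thesis using ff_tail[of p "Suc N"] unfolding p_def[symmetric] by simp
qed

lemma ff_nondiff:
  assumes x: "0 \<le> x" "x < 1"
  shows "\<not> ff differentiable (at x within {0..1})"
proof
  assume "ff differentiable (at x within {0..1})"
  then obtain D where "(ff has_real_derivative D) (at x within {0..1})"
    by (auto simp: real_differentiable_def)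
  then have "\<forall>e>0. \<exists>d>0. \<forall>y\<in>{0..1}. norm (y - x) < d \<longrightarrow> norm (ff y - ff x - D * (y - x)) \<le> e * norm (y - x)"
    unfolding has_field_derivative_def has_derivative_within_alt by simp
  then obtain d where d: "0 < d"
    and dd: "\<And>y. y \<in> {0..1} \<Longrightarrow> \<bar>y - x\<bar> < d \<Longrightarrow> \<bar>ff y - ff x - D * (y - x)\<bar> \<le> 1/2 * \<bar>y - x\<bar>"
    by (metis real_norm_def zero_less_divide_1_iff zero_less_numeral)
  obtain N where N: "\<bar>D\<bar> + 1 + 1/d < 3^N" using real_arch_pow[of "3::real"] by auto
  define K where "K = 3 * real (MM N)"
  have K3: "3^Suc N \<le> K" unfolding K_def MM_def by simp
  have p3: "(3::real)^N \<le> 3^Suc N" by simp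
  have p0: "(0::real) < 3^Suc N" by simp
  have Kpos: "0 < K" using K3 p0 by linarith
  define j where "j = \<lfloor>K * x\<rfloor>"
  define a where "a = of_int j / K"
  define b where "b = (of_int j + 1) / K"
  have j1: "of_int j \<le> K * x" "K * x < of_int j + 1" unfolding j_def by linarith+
  have ax: "a \<le> x" unfolding a_def using j1 Kpos by (simp add: divide_le_eq mult.commute)
  have xb: "x < b" unfolding b_def using j1 Kpos by (simp add: less_divide_eq mult.commute)
  have j0: "0 \<le> j" unfolding j_def using x Kpos by simp
  have a0: "0 \<le> a" unfolding a_def using j0 Kpos by simp
  have Kint: "K = of_int (int (3 * MM N))" unfolding K_def by simp
  have "K * x < K * 1" using x(2) Kpos by (intro mult_strict_left_mono) auto
  then have "of_int j < K" using j1 by linarith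
  then have "j < int (3 * MM N)" unfolding Kint by linarith
  then have "of_int j + 1 \<le> K" unfolding Kint by linarith
  then have b1: "b \<le> 1" unfolding b_def using Kpos by simp
  have ba: "b - a = 1 / K" unfolding a_def b_def using Kpos by (simp add: field_simps)
  have dpos: "0 < 1/d" using d by simp
  have "1/d < K" using N K3 p3 abs_ge_zero[of D] by linarith
  then have small: "1 / K < d" using d Kpos by (simp add: divide_less_eq mult.commute)
  obtain c s where s: "\<bar>s\<bar> = 3^(Suc N)"
    and cs: "\<And>y. of_int j / (3 * real (MM N)) \<le> y \<Longrightarrow> y \<le> (of_int j + 1) / (3 * real (MM N)) \<Longrightarrow> FF (Suc N) y = c + s * y"
    using FF_aff3[of N] by blast
  have le1: "of_int j / K \<le> (of_int j + 1) / K" using Kpos by (simp add: divide_right_mono)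
  have fa: "ff a = c + s * a"
    using ff_grid[of j N] cs[of "of_int j / K"] le1 unfolding a_def K_def by simp
  have fb: "ff b = c + s * b"
    using ff_grid[of "j+1" N] cs[of "(of_int j + 1) / K"] le1 unfolding b_def K_def by simp
  have bx: "\<bar>b - x\<bar> < d" using xb ax ba small by simp
  have axd: "\<bar>a - x\<bar> < d" using xb ax ba small by simp
  have e1: "\<bar>ff b - ff x - D * (b - x)\<bar> \<le> 1/2 * (b - x)"
    using dd[of b] a0 b1 xb ax bx x by auto
  have e2: "\<bar>ff a - ff x - D * (a - x)\<bar> \<le> 1/2 * (x - a)"
    using dd[of a] a0 b1 xb ax axd x by auto
  have eq: "(s - D) * (b - a) = (ff b - ff x - D * (b - x)) - (ff a - ff x - D * (a - x))"
    using fa fb by (simp add: algebra_simps)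
  have "\<bar>(s - D) * (b - a)\<bar> \<le> \<bar>ff b - ff x - D * (b - x)\<bar> + \<bar>ff a - ff x - D * (a - x)\<bar>"
    unfolding eq by (rule abs_triangle_ineq4)
  moreover have "1/2 * (b - x) + 1/2 * (x - a) = 1/2 * (b - a)" by (simp add: field_simps)
  ultimately have "\<bar>(s - D) * (b - a)\<bar> \<le> 1/2 * (b - a)" using e1 e2 by linarith
  then have "\<bar>s - D\<bar> * (b - a) \<le> 1/2 * (b - a)" using ax xb by (simp add: abs_mult)
  then have sd: "\<bar>s - D\<bar> \<le> 1/2" using ax xb by simp
  have "\<bar>s\<bar> \<le> \<bar>s - D\<bar> + \<bar>D\<bar>" using abs_triangle_ineq[of "s - D" D] by simp
  then show False using s N sd p3 dpos by linarith
qed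


lemma affine_pre:
  fixes c t :: real assumes c: "c \<noteq> 0" and E: "E \<in> sets borel"
  shows "ennreal \<bar>c\<bar> * emeasure lborel ((\<lambda>x. t + c * x) -` E) = emeasure lborel E"
proof -
  have eq: "lborel = density (distr lborel borel (\<lambda>x. t + c * x)) (\<lambda>_. ennreal \<bar>c\<bar>)"
    by (rule lborel_real_affine[OF c])
  have mf: "(\<lambda>x. t + c * x) \<in> borel_measurable lborel" by simp
  have "emeasure lborel E = emeasure (density (distr lborel borel (\<lambda>x. t + c * x)) (\<lambda>_. ennreal \<bar>c\<bar>)) E"
    using arg_cong[where f="\<lambda>M. emeasure M E", OF eq] by simp
  also have "\<dots> = (\<integral>\<^sup>+ x. ennreal \<bar>c\<bar> * indicator E x \<partial>distr lborel borel (\<lambda>x. t + c * x))"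
    using E by (subst emeasure_density) auto
  also have "\<dots> = ennreal \<bar>c\<bar> * emeasure (distr lborel borel (\<lambda>x. t + c * x)) E"
    using E by (subst nn_integral_cmult_indicator) auto
  also have "\<dots> = ennreal \<bar>c\<bar> * emeasure lborel ((\<lambda>x. t + c * x) -` E)"
    using E mf by (subst emeasure_distr) auto
  finally show ?thesis by simp
qed

lemma affine_pre3:
  fixes c t :: real assumes c: "\<bar>c\<bar> = 3" and E: "E \<in> sets borel"
  shows "emeasure lborel ((\<lambda>x. t + c * x) -` E) = ennreal (1/3) * emeasure lborel E"
proof -
  have "c \<noteq> 0" using c by auto
  from affine_pre[OF this E, of t] c
  have "ennreal 3 * emeasure lborel ((\<lambda>x. t + c * x) -` E) = emeasure lborel E" by simp
  then have "ennreal (1/3) * (ennreal 3 * emeasure lborel ((\<lambda>x. t + c * x) -` E)) = ennreal (1/3) * emeasure lborel E"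
    by simp
  moreover have "ennreal (1/3) * ennreal 3 = 1" using ennreal_mult[of "1/3" 3] by simp
  ultimately show ?thesis by (simp add: mult.assoc[symmetric])
qed

lemma cell_choice:
  fixes M :: nat assumes M: "0 < M" and x: "0 \<le> x" "x \<le> 1"
  obtains m i :: nat where "m < M" "i < 3"
    "(3 * real m + real i) / (3 * real M) \<le> x" "x \<le> (3 * real m + real i + 1) / (3 * real M)"
proof -
  define K where "K = 3 * real M"
  have K: "0 < K" using M by (simp add: K_def)
  define J where "J = (if x < 1 then nat \<lfloor>K * x\<rfloor> else 3 * M - 1)"
  have J: "J < 3 * M \<and> real J / K \<le> x \<and> x \<le> (real J + 1) / K"
  proof (cases "x < 1")
    case True
    have f0: "0 \<le> \<lfloor>K * x\<rfloor>" using K x by simp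
    have J': "real J = of_int \<lfloor>K * x\<rfloor>" using True f0 by (simp add: J_def)
    have a: "of_int \<lfloor>K * x\<rfloor> \<le> K * x" "K * x < of_int \<lfloor>K * x\<rfloor> + 1" by linarith+
    have "K * x < K * 1" using True K by (intro mult_strict_left_mono) auto
    then have "of_int \<lfloor>K * x\<rfloor> < K" using a by linarith
    then have "real J < real (3 * M)" using J' by (simp add: K_def)
    then have "J < 3 * M" by linarith
    moreover have "real J / K \<le> x" using a K J' by (simp add: divide_le_eq mult.commute)
    moreover have "x \<le> (real J + 1) / K" using a K J' by (simp add: le_divide_eq mult.commute)
    ultimately show ?thesis by blast
  next
    case False
    then have x1: "x = 1" using x by simp
    have J': "J = 3 * M - 1" using False by (simp add: J_def)
    have rJ: "real J = 3 * real M - 1" using M J' by (simp add: of_nat_diff)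
    show ?thesis using M K x1 by (simp add: J' rJ[unfolded J'] K_def field_simps)
  qed
  define m where "m = J div 3"
  define i where "i = J mod 3"
  have Jmi: "J = 3 * m + i" unfolding m_def i_def by simp
  have mM: "m < M" using J unfolding m_def by (auto intro: less_mult_imp_div_less simp: mult.commute)
  have i3: "i < 3" unfolding i_def by simp
  have eqJ: "real J = 3 * real m + real i" unfolding Jmi by simp
  show ?thesis
    apply (rule that[of m i])
    using mM i3 J eqJ by (simp_all add: K_def)
qed

lemma rho_cell:
  assumes "m < MM k" "i < 3"
    "(3 * real m + real i) / (3 * real (MM k)) \<le> x" "x \<le> (3 * real m + real i + 1) / (3 * real (MM k))"
  shows "rho k x = (if int i = 1 then (4 * real m + 2) / real (MM k) else - (2 * real m + real i) / real (MM k))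
           + (if int i = 1 then -3 else 3) * x
         \<and> real m / real (MM k) \<le> rho k x \<and> rho k x \<le> (real m + 1) / real (MM k)"
  using rho_affine[where i="int i" and m="int m" and k=k and x=x] assms by simp

lemma rho_unit: "0 \<le> x \<Longrightarrow> x \<le> 1 \<Longrightarrow> 0 \<le> rho k x \<and> rho k x \<le> 1"
proof -
  assume x: "0 \<le> x" "x \<le> 1"
  obtain m i where mi: "m < MM k" "i < 3"
    "(3 * real m + real i) / (3 * real (MM k)) \<le> x" "x \<le> (3 * real m + real i + 1) / (3 * real (MM k))"
    using cell_choice[OF MM_pos x] by blast
  have r: "real m / real (MM k) \<le> rho k x \<and> rho k x \<le> (real m + 1) / real (MM k)"
    using rho_cell[OF mi] by blast
  have M: "0 < real (MM k)" using MM_pos[of k] by simp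
  have "real m + 1 \<le> real (MM k)" using mi(1) by linarith
  then have "(real m + 1) / real (MM k) \<le> 1" using M by simp
  moreover have "0 \<le> real m / real (MM k)" using M by simp
  ultimately show ?thesis using r by linarith
qed


lemma cells_sum_le:
  fixes M :: nat assumes M: "0 < M" and B: "B \<in> sets borel"
  shows "(\<Sum>m<M. emeasure lborel (B \<inter> {real m / real M .. (real m + 1) / real M})) \<le> emeasure lborel B"
proof -
  define C' where "C' m = B \<inter> {real m / real M ..< (real m + 1) / real M}" for m :: nat
  have Mr: "0 < real M" using M by simp
  have le: "emeasure lborel (B \<inter> {real m / real M .. (real m + 1) / real M}) \<le> emeasure lborel (C' m)" for m :: nat
  proof -
    have "B \<inter> {real m / real M .. (real m + 1) / real M} \<subseteq> C' m \<union> {(real m + 1) / real M}"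
      unfolding C'_def by auto
    moreover have "C' m \<union> {(real m + 1) / real M} \<in> sets borel" using B unfolding C'_def by (intro sets.Un sets.Int) auto
    ultimately have "emeasure lborel (B \<inter> {real m / real M .. (real m + 1) / real M}) \<le> emeasure lborel (C' m \<union> {(real m + 1) / real M})"
      by (intro emeasure_mono) auto
    also have "\<dots> \<le> emeasure lborel (C' m) + emeasure lborel {(real m + 1) / real M}"
      by (intro emeasure_subadditive) (auto simp: C'_def B)
    finally show ?thesis by simp
  qed
  have disj: "disjoint_family_on C' {..<M}"
    unfolding disjoint_family_on_def
  proof (intro ballI impI)
    fix m n :: nat assume mn: "m \<noteq> n"
    show "C' m \<inter> C' n = {}"
    proof (rule ccontr)
      assume "C' m \<inter> C' n \<noteq> {}"
      then obtain x where "x \<in> C' m" "x \<in> C' n" by blast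
      then have h: "real m \<le> real M * x" "real M * x < real m + 1" "real n \<le> real M * x" "real M * x < real n + 1"
        unfolding C'_def using Mr by (auto simp: divide_le_eq less_divide_eq mult.commute)
      then have "real m < real n + 1" "real n < real m + 1" by linarith+
      then have "m = n" by linarith
      then show False using mn by simp
    qed
  qed
  have "(\<Sum>m<M. emeasure lborel (B \<inter> {real m / real M .. (real m + 1) / real M})) \<le> (\<Sum>m<M. emeasure lborel (C' m))"
    by (intro sum_mono le)
  also have "\<dots> = emeasure lborel (\<Union>m<M. C' m)"
    by (rule sum_emeasure[OF _ disj]) (auto simp: C'_def B)
  also have "\<dots> \<le> emeasure lborel B"
    by (intro emeasure_mono) (auto simp: C'_def B)
  finally show ?thesis .
qed

lemma rho_measure:
  assumes B: "B \<in> sets borel"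
  shows "emeasure lborel {x\<in>{0..1}. rho k x \<in> B} \<le> emeasure lborel B"
proof -
  define M where "M = MM k"
  have M: "0 < M" unfolding M_def by (rule MM_pos)
  define C where "C m = B \<inter> {real m / real M .. (real m + 1) / real M}" for m :: nat
  define tt where "tt m i = (if int i = 1 then (4 * real m + 2) / real M else - (2 * real m + real i) / real M)" for m i :: nat
  define ss where "ss i = (if int i = 1 then -3 else (3::real))" for i :: nat
  define P where "P p = (\<lambda>x. tt (fst p) (snd p) + ss (snd p) * x) -` C (fst p)" for p :: "nat \<times> nat"
  define I where "I = {..<M} \<times> {..<(3::nat)}"
  have CB: "C m \<in> sets borel" for m unfolding C_def using B by auto
  have PB: "P p \<in> sets borel" for p
    unfolding P_def by (rule measurable_sets_borel[OF _ CB]) simp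
  have cover: "{x\<in>{0..1}. rho k x \<in> B} \<subseteq> (\<Union>p\<in>I. P p)"
  proof
    fix x assume x: "x \<in> {x\<in>{0..1}. rho k x \<in> B}"
    then obtain m i where mi: "m < MM k" "i < 3"
      "(3 * real m + real i) / (3 * real (MM k)) \<le> x" "x \<le> (3 * real m + real i + 1) / (3 * real (MM k))"
      using cell_choice[OF MM_pos, of x k] by auto
    have r: "rho k x = tt m i + ss i * x \<and> real m / real M \<le> rho k x \<and> rho k x \<le> (real m + 1) / real M"
      using rho_cell[OF mi] unfolding tt_def ss_def M_def by simp
    have "x \<in> P (m, i)" unfolding P_def C_def using r x by simp
    moreover have "(m, i) \<in> I" unfolding I_def M_def using mi by simp
    ultimately show "x \<in> (\<Union>p\<in>I. P p)" by blast
  qed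
  have "emeasure lborel {x\<in>{0..1}. rho k x \<in> B} \<le> emeasure lborel (\<Union>p\<in>I. P p)"
    by (intro emeasure_mono cover) (auto intro: PB)
  also have "\<dots> \<le> (\<Sum>p\<in>I. emeasure lborel (P p))"
    by (intro emeasure_subadditive_finite) (auto simp: I_def PB)
  also have "\<dots> = (\<Sum>p\<in>I. ennreal (1/3) * emeasure lborel (C (fst p)))"
  proof (rule sum.cong[OF refl])
    fix p show "emeasure lborel (P p) = ennreal (1/3) * emeasure lborel (C (fst p))"
      unfolding P_def by (rule affine_pre3[OF _ CB]) (simp add: ss_def)
  qed
  also have "\<dots> = (\<Sum>m<M. \<Sum>i<(3::nat). ennreal (1/3) * emeasure lborel (C m))"
    unfolding I_def sum.cartesian_product by (rule sum.cong[OF refl]) (auto simp: case_prod_beta)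
  also have "\<dots> = (\<Sum>m<M. emeasure lborel (C m))"
  proof (rule sum.cong[OF refl])
    fix m
    have "(\<Sum>i<(3::nat). ennreal (1/3) * emeasure lborel (C m)) = of_nat 3 * (ennreal (1/3) * emeasure lborel (C m))"
      by simp
    also have "\<dots> = (ennreal 3 * ennreal (1/3)) * emeasure lborel (C m)" by (simp add: mult.assoc)
    also have "ennreal 3 * ennreal (1/3) = 1" using ennreal_mult[of 3 "1/3"] by simp
    finally show "(\<Sum>i<(3::nat). ennreal (1/3) * emeasure lborel (C m)) = emeasure lborel (C m)" by simp
  qed
  also have "\<dots> \<le> emeasure lborel B" unfolding C_def by (rule cells_sum_le[OF M B])
  finally show ?thesis .
qed


lemma FF_meas [measurable]: "FF n \<in> borel_measurable borel"
  by (rule borel_measurable_continuous_onI[OF FF_cont])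

lemma rho_meas [measurable]: "rho k \<in> borel_measurable borel"
  by (rule borel_measurable_continuous_onI[OF rho_cont])

lemma ff_meas [measurable]: "ff \<in> borel_measurable borel"
  by (rule borel_measurable_continuous_onI[OF ff_cont])

lemma FF_measure:
  "B \<in> sets borel \<Longrightarrow> emeasure lborel {x\<in>{0..1}. FF n x \<in> B} \<le> emeasure lborel B"
proof (induction n arbitrary: B)
  case 0
  have "{x\<in>{0..1}. FF 0 x \<in> B} \<subseteq> B" by auto
  then show ?case using 0 by (intro emeasure_mono) auto
next
  case (Suc n)
  define B' where "B' = {y\<in>{0..1}. FF n y \<in> B}"
  have B': "B' \<in> sets borel" unfolding B'_def using Suc.prems by measurable
  have "{x\<in>{0..1}. FF (Suc n) x \<in> B} = {x\<in>{0..1}. rho n x \<in> B'}"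
    unfolding B'_def using rho_unit[of _ n] by auto
  then have "emeasure lborel {x\<in>{0..1}. FF (Suc n) x \<in> B} \<le> emeasure lborel B'"
    using rho_measure[OF B', of n] by simp
  also have "\<dots> \<le> emeasure lborel B" unfolding B'_def by (rule Suc.IH[OF Suc.prems])
  finally show ?case .
qed

lemma ff_measure_open:
  assumes U: "open U"
  shows "emeasure lborel {x\<in>{0..1}. ff x \<in> U} \<le> emeasure lborel U"
proof -
  have UB: "U \<in> sets borel" using U by simp
  define E where "E n = {x\<in>{0..1}. \<forall>k\<ge>n. FF k x \<in> U}" for n
  have EB: "E n \<in> sets borel" for n unfolding E_def using UB by measurable
  have inc: "incseq E" unfolding incseq_def E_def by auto
  have sub: "{x\<in>{0..1}. ff x \<in> U} \<subseteq> (\<Union>n. E n)"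
  proof
    fix x assume x: "x \<in> {x\<in>{0..1}. ff x \<in> U}"
    then have "eventually (\<lambda>k. FF k x \<in> U) sequentially"
      using topological_tendstoD[OF FF_tendsto U] by auto
    then obtain n where "\<forall>k\<ge>n. FF k x \<in> U" by (auto simp: eventually_sequentially)
    then show "x \<in> (\<Union>n. E n)" using x unfolding E_def by auto
  qed
  have "emeasure lborel {x\<in>{0..1}. ff x \<in> U} \<le> emeasure lborel (\<Union>n. E n)"
    by (intro emeasure_mono sub) (auto intro: EB)
  also have "\<dots> = (SUP n. emeasure lborel (E n))"
    by (rule SUP_emeasure_incseq[symmetric]) (auto intro: EB inc)
  also have "\<dots> \<le> emeasure lborel U"
  proof (rule SUP_least)
    fix n
    have "E n \<subseteq> {x\<in>{0..1}. FF n x \<in> U}" unfolding E_def by auto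
    then have "emeasure lborel (E n) \<le> emeasure lborel {x\<in>{0..1}. FF n x \<in> U}"
      using UB by (intro emeasure_mono) auto
    also have "\<dots> \<le> emeasure lborel U" by (rule FF_measure[OF UB])
    finally show "emeasure lborel (E n) \<le> emeasure lborel U" .
  qed
  finally show ?thesis .
qed

lemma ff_measure_null:
  assumes B: "B \<in> sets borel" and B0: "emeasure lborel B = 0"
  shows "emeasure lborel {x\<in>{0..1}. ff x \<in> B} = 0"
proof -
  have "emeasure lborel {x\<in>{0..1}. ff x \<in> B} \<le> 0 + ennreal e" if e: "0 < e" for e :: real
  proof -
    obtain U where U: "open U" "B \<subseteq> U" "emeasure lborel (U - B) < e"
      using outer_regular_lborel[OF B e] by blast
    have UB: "U \<in> sets borel" using U by simp
    have mU: "{x\<in>{0..1}. ff x \<in> U} \<in> sets borel" using UB by measurable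
    have "emeasure lborel {x\<in>{0..1}. ff x \<in> B} \<le> emeasure lborel {x\<in>{0..1}. ff x \<in> U}"
      using U mU by (intro emeasure_mono) auto
    also have "\<dots> \<le> emeasure lborel U" by (rule ff_measure_open[OF U(1)])
    also have "\<dots> \<le> emeasure lborel (B \<union> (U - B))" using UB B by (intro emeasure_mono) auto
    also have "\<dots> \<le> emeasure lborel B + emeasure lborel (U - B)" using UB B by (intro emeasure_subadditive sets.Diff) auto
    also have "\<dots> = emeasure lborel (U - B)" using B0 by simp
    also have "\<dots> \<le> 0 + ennreal e" using U(3) by simp
    finally show ?thesis .
  qed
  then have "emeasure lborel {x\<in>{0..1}. ff x \<in> B} \<le> 0" by (rule ennreal_le_epsilon)
  then show ?thesis by simp
qed


lemma not_sing:
  "\<not> mutually_singular (distr (density lebesgue (indicator (critical_set ff))) lborel ff) lborel"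
proof
  define S where "S = critical_set ff"
  have S01: "S \<subseteq> {0..1}" unfolding S_def critical_set_def by auto
  have S0: "{0..<1} \<subseteq> S" unfolding S_def critical_set_def using ff_nondiff by auto
  have S_eq: "S = {0..<1} \<union> (S \<inter> {1})" using S01 S0 by auto
  have "S \<inter> {1} \<in> sets borel"
  proof (cases "1 \<in> S")
    case True
    then have "S \<inter> {1} = {1}" by auto
    then show ?thesis by (simp add: borel_closed)
  next
    case False
    then have "S \<inter> {1} = {}" by auto
    then show ?thesis by simp
  qed
  then have SB: "S \<in> sets borel" by (subst S_eq) auto
  have mI: "(indicator S :: real \<Rightarrow> ennreal) \<in> borel_measurable lebesgue"
    using SB by (intro borel_measurable_indicator) simp
  have mf: "ff \<in> measurable (density lebesgue (indicator S)) lborel"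
    by (simp add: measurable_completion)
  define \<mu> where "\<mu> = distr (density lebesgue (indicator S)) lborel ff"
  have mu_eq: "emeasure \<mu> X = (\<integral>\<^sup>+ x. indicator S x * indicator (ff -` X) x \<partial>lborel)" if X: "X \<in> sets borel" for X
  proof -
    have pre: "ff -` X \<in> sets borel" using X by (rule measurable_sets_borel[OF ff_meas])
    have "emeasure \<mu> X = emeasure (density lebesgue (indicator S)) (ff -` X \<inter> space (density lebesgue (indicator S)))"
      unfolding \<mu>_def using X by (intro emeasure_distr[OF mf]) simp
    also have "\<dots> = emeasure (density lebesgue (indicator S)) (ff -` X)" by simp
    also have "\<dots> = (\<integral>\<^sup>+ x. indicator S x * indicator (ff -` X) x \<partial>lebesgue)"
      using pre by (intro emeasure_density[OF mI]) simp
    also have "\<dots> = (\<integral>\<^sup>+ x. indicator S x * indicator (ff -` X) x \<partial>lborel)"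
      by (rule nn_integral_completion)
    finally show ?thesis .
  qed
  have upper: "emeasure \<mu> X \<le> emeasure lborel {x\<in>{0..1}. ff x \<in> X}" if X: "X \<in> sets borel" for X
  proof -
    have m: "{x\<in>{0..1}. ff x \<in> X} \<in> sets borel" using X by measurable
    have "emeasure \<mu> X \<le> (\<integral>\<^sup>+ x. indicator {x\<in>{0..1}. ff x \<in> X} x \<partial>lborel)"
      unfolding mu_eq[OF X] using S01 by (intro nn_integral_mono) (auto split: split_indicator)
    also have "\<dots> = emeasure lborel {x\<in>{0..1}. ff x \<in> X}" using m by simp
    finally show ?thesis .
  qed
  have lower: "emeasure \<mu> UNIV \<ge> 1"
  proof -
    have "(1::ennreal) = emeasure lborel {0..<(1::real)}" by simp
    also have "\<dots> = (\<integral>\<^sup>+ x. indicator {0..<(1::real)} x \<partial>lborel)" by simp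
    also have "\<dots> \<le> (\<integral>\<^sup>+ x. indicator S x * indicator (ff -` UNIV) x \<partial>lborel)"
      using S0 by (intro nn_integral_mono) (auto split: split_indicator)
    also have "\<dots> = emeasure \<mu> UNIV" by (rule mu_eq[symmetric]) simp
    finally show ?thesis .
  qed
  assume "mutually_singular (distr (density lebesgue (indicator (critical_set ff))) lborel ff) lborel"
  then obtain A where A: "A \<in> sets \<mu>" "emeasure \<mu> A = 0" "emeasure lborel (space lborel - A) = 0"
    unfolding mutually_singular_def \<mu>_def S_def by blast
  have AB: "A \<in> sets borel" using A(1) unfolding \<mu>_def by simp
  have CB: "UNIV - A \<in> sets borel" using AB by auto
  have "emeasure \<mu> (UNIV - A) \<le> emeasure lborel {x\<in>{0..1}. ff x \<in> UNIV - A}" by (rule upper[OF CB])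
  also have "\<dots> = 0" using A(3) CB by (intro ff_measure_null) auto
  finally have C0: "emeasure \<mu> (UNIV - A) = 0" by simp
  have "emeasure \<mu> UNIV \<le> emeasure \<mu> A + emeasure \<mu> (UNIV - A)"
  proof -
    have "UNIV = A \<union> (UNIV - A)" by auto
    then have "emeasure \<mu> UNIV = emeasure \<mu> (A \<union> (UNIV - A))" by simp
    also have "\<dots> \<le> emeasure \<mu> A + emeasure \<mu> (UNIV - A)"
      using A(1) by (intro emeasure_subadditive) (auto simp: \<mu>_def)
    finally show ?thesis .
  qed
  then have "emeasure \<mu> UNIV \<le> 0" using A(2) C0 by simp
  then show False using lower by simp
qed

theorem theorem3:
  shows "\<exists>f :: real \<Rightarrow> real.
    continuous_on {0..1} f \<and>
    (\<forall>\<alpha>::real. 0 < \<alpha> \<and> \<alpha> < 1 \<longrightarrow> holder_on01 \<alpha> f) \<and>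
    \<not> mutually_singular
        (distr (density lebesgue (indicator (critical_set f))) lborel f) lborel"
proof (intro exI[of _ ff] conjI allI impI)
  show "continuous_on {0..1} ff" using ff_cont continuous_on_subset by blast
  show "\<And>\<alpha>. 0 < \<alpha> \<and> \<alpha> < 1 \<Longrightarrow> holder_on01 \<alpha> ff" using ff_holder by blast
  show "\<not> mutually_singular (distr (density lebesgue (indicator (critical_set ff))) lborel ff) lborel"
    by (rule not_sing)
qed

end
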